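(* Let $(\mu_n)_{n\ge1}$ be probability measures on $\mathbb R$ converging in distribution to a probability measure $\mu_\infty$. Assume that there are real numbers $B_n(\alpha)$, $n\ge1$, $\alpha>0$, such that for every continuous compactly supported $\phi:\mathbb R\to\mathbb R$ with $\|\phi\|_\infty\le1$, every $n\ge1$ and every $\alpha>0$, \[ \Big|\int_{\mathbb R}\phi\,d\mu_n\Big|\le \frac{\sup_{x\in\mathbb R}\big|\int_0^x\phi(t)\,dt\big|}{\alpha}+|B_n(\alpha)|, \qquad\text{and}\qquad \lim_{\alpha\to0}\limsup_{n\to\infty}|B_n(\alpha)|=0. \] Then $\mu_n$ converges to $\mu_\infty$ in total variation. *)

theory Defs
  imports "HOL-Probability.Probability"
begin

definition tv_dist :: "real measure \<Rightarrow> real measure \<Rightarrow> real" where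
  "tv_dist M N = (SUP A \<in> sets borel. \<bar>measure M A - measure N A\<bar>)"

definition tv_conv :: "(nat \<Rightarrow> real measure) \<Rightarrow> real measure \<Rightarrow> bool" where
  "tv_conv M_seq M \<longleftrightarrow> (\<lambda>n. tv_dist (M_seq n) M) \<longlonglongrightarrow> 0"

end

theory Submission
  imports Defs
begin


lemma LBINT_deriv:
  fixes f :: "real \<Rightarrow> real" and c x :: real
  assumes "continuous_on UNIV f"
  shows "((\<lambda>u::real. LBINT y=c..u. f y) has_real_derivative f x) (at x)"
proof -
  define d where "d = min c x - 1"
  define e where "e = max c x + 1"
  have "((\<lambda>u::real. LBINT y=c..u. f y) has_vector_derivative f x) (at x within {d..e})"
    by (rule interval_integral_FTC2) (auto simp: d_def e_def intro: continuous_on_subset[OF assms])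
  then have "((\<lambda>u::real. LBINT y=c..u. f y) has_vector_derivative f x) (at x within {d<..<e})"
    by (rule has_vector_derivative_within_subset) auto
  then have "((\<lambda>u::real. LBINT y=c..u. f y) has_vector_derivative f x) (at x)"
    by (subst (asm) has_vector_derivative_within_open) (auto simp: d_def e_def)
  then show ?thesis by (simp add: has_real_derivative_iff_has_vector_derivative)
qed

lemma FTC_all:
  fixes f F :: "real \<Rightarrow> real" and a b :: real
  assumes "continuous_on UNIV f" "\<And>x. (F has_real_derivative f x) (at x)"
  shows "(LBINT t=a..b. f t) = F b - F a"
  by (rule interval_integral_FTC_finite)
     (auto intro: continuous_on_subset[OF assms(1)] has_field_derivative_at_within[OF assms(2)]
       simp: has_real_derivative_iff_has_vector_derivative[symmetric])



lemma mvt_bound: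
  fixes F F' :: "real \<Rightarrow> real"
  assumes "a \<le> b" "\<And>x. a \<le> x \<Longrightarrow> x \<le> b \<Longrightarrow> (F has_real_derivative F' x) (at x)"
    "\<And>x. a \<le> x \<Longrightarrow> x \<le> b \<Longrightarrow> \<bar>F' x\<bar> \<le> C"
  shows "\<bar>F b - F a\<bar> \<le> C * (b - a)"
proof (cases "a = b")
  case True then show ?thesis by simp
next
  case False
  then have "a < b" using assms(1) by simp
  from MVT2[OF this, of F F'] assms(2) obtain z where z: "a < z" "z < b" "F b - F a = (b - a) * F' z"
    by auto
  have "\<bar>F' z\<bar> \<le> C" using z assms(3) by auto
  then show ?thesis using z \<open>a < b\<close> by (simp add: abs_mult mult.commute mult_right_mono)
qed

lemma smoothing:
  fixes \<phi> :: "real \<Rightarrow> real" and L h :: real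
  assumes cont: "continuous_on UNIV \<phi>" and bnd: "\<And>x. \<bar>\<phi> x\<bar> \<le> 1"
    and supp: "\<And>x. x \<notin> {-L..L} \<Longrightarrow> \<phi> x = 0" and h: "h > 0"
  defines "\<Phi> \<equiv> \<lambda>x::real. LBINT t=(0::real)..x. \<phi> t"
  defines "\<psi> \<equiv> \<lambda>x. (\<Phi> (x+h) - \<Phi> x) / h"
  shows "continuous_on UNIV \<psi>" "\<And>x. \<bar>\<psi> x\<bar> \<le> 1" "\<And>x. x \<notin> {-L-h..L} \<Longrightarrow> \<psi> x = 0"
    "\<And>x y. \<bar>\<psi> x - \<psi> y\<bar> \<le> 2 / h * \<bar>x - y\<bar>"
    "\<And>x. \<bar>LBINT t=0..ereal x. (\<phi> t - \<psi> t) / 2\<bar> \<le> h"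
proof -
  have D: "\<And>x. (\<Phi> has_real_derivative \<phi> x) (at x)"
    unfolding \<Phi>_def by (rule LBINT_deriv[OF cont])
  have Lip: "\<bar>\<Phi> x - \<Phi> y\<bar> \<le> \<bar>x - y\<bar>" for x y
  proof (cases "y \<le> x")
    case True
    from mvt_bound[OF True D bnd] True show ?thesis by simp
  next
    case False
    then have "x \<le> y" by simp
    from mvt_bound[OF this D bnd] this show ?thesis by simp
  qed
  have contPhi: "continuous_on UNIV \<Phi>"
    using D by (meson DERIV_isCont continuous_at_imp_continuous_on)
  show psicont: "continuous_on UNIV \<psi>" unfolding \<psi>_def
    using h by (intro continuous_intros continuous_on_compose2[OF contPhi]) auto
  show "\<bar>\<psi> x\<bar> \<le> 1" for x
    using Lip[of "x+h" x] h by (simp add: \<psi>_def divide_le_eq_1 abs_divide)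
  show "\<psi> x = 0" if "x \<notin> {-L-h..L}" for x
  proof -
    have "\<bar>\<Phi> (x+h) - \<Phi> x\<bar> \<le> 0 * ((x+h) - x)"
      by (rule mvt_bound[OF _ D]) (use h that supp in auto)
    then show ?thesis by (simp add: \<psi>_def)
  qed
  show "\<bar>\<psi> x - \<psi> y\<bar> \<le> 2 / h * \<bar>x - y\<bar>" for x y
  proof -
    have "\<psi> x - \<psi> y = ((\<Phi> (x+h) - \<Phi> (y+h)) - (\<Phi> x - \<Phi> y)) / h"
      by (simp add: \<psi>_def diff_divide_distrib)
    also have "\<bar>\<dots>\<bar> = \<bar>(\<Phi> (x+h) - \<Phi> (y+h)) - (\<Phi> x - \<Phi> y)\<bar> / h"
      using h by (simp add: abs_divide)
    also have "\<dots> \<le> (2 * \<bar>x - y\<bar>) / h"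
    proof (rule divide_right_mono)
      show "\<bar>(\<Phi> (x+h) - \<Phi> (y+h)) - (\<Phi> x - \<Phi> y)\<bar> \<le> 2 * \<bar>x - y\<bar>"
        using Lip[of "x+h" "y+h"] Lip[of x y] abs_triangle_ineq4[of "\<Phi> (x+h) - \<Phi> (y+h)" "\<Phi> x - \<Phi> y"]
        by simp
    qed (use h in simp)
    finally show ?thesis by simp
  qed
  define I where "I = (\<lambda>x::real. LBINT t=(0::real)..x. \<Phi> t)"
  have DI: "\<And>x. (I has_real_derivative \<Phi> x) (at x)"
    unfolding I_def by (rule LBINT_deriv[OF contPhi])
  define K where "K = (\<lambda>x. (\<Phi> x - (I (x+h) - I x) / h) / 2)"
  have DK: "(K has_real_derivative (\<phi> x - \<psi> x) / 2) (at x)" for x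
  proof -
    have "((\<lambda>x. I (x+h)) has_real_derivative \<Phi> (x+h)) (at x)"
      using DI[of "x+h"] by (simp add: DERIV_shift)
    then show ?thesis unfolding K_def \<psi>_def using h
      by (auto intro!: derivative_eq_intros D DI simp: diff_divide_distrib)
  qed
  have contg: "continuous_on UNIV (\<lambda>t. (\<phi> t - \<psi> t) / 2)"
    by (intro continuous_intros cont psicont) auto
  have Kb: "\<bar>K x\<bar> \<le> h / 2" for x
  proof -
    define m where "m = (\<lambda>s. s * \<Phi> x - (I (x+s) - I x))"
    have Dm: "(m has_real_derivative \<Phi> x - \<Phi> (x + s)) (at s)" for s
    proof -
      have "((\<lambda>s. I (x+s)) has_real_derivative \<Phi> (x+s)) (at s)"
        using DI[of "x+s"] DERIV_shift[of I "\<Phi> (x+s)" s x] by (simp add: add.commute)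
      then show ?thesis unfolding m_def
        by (auto intro!: derivative_eq_intros)
    qed
    have "\<bar>m h - m 0\<bar> \<le> h * (h - 0)"
      by (rule mvt_bound[OF _ Dm]) (use h in \<open>auto intro: order_trans[OF Lip]\<close>)
    then have "\<bar>m h\<bar> \<le> h * h" by (simp add: m_def)
    moreover have "K x = m h / h / 2" using h by (simp add: K_def m_def field_simps)
    ultimately have "h * (\<bar>K x\<bar> * 2) \<le> h * h" using h by (simp add: abs_mult)
    then have "\<bar>K x\<bar> * 2 \<le> h" using h by (simp add: mult_le_cancel_left_pos)
    then show ?thesis by simp
  qed
  show "\<bar>LBINT t=0..ereal x. (\<phi> t - \<psi> t) / 2\<bar> \<le> h" for x
  proof -
    have "(LBINT t=ereal 0..ereal x. (\<phi> t - \<psi> t) / 2) = K x - K 0"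
      by (rule FTC_all[OF contg DK])
    then have "(LBINT t=0..ereal x. (\<phi> t - \<psi> t) / 2) = K x - K 0"
      by (simp add: zero_ereal_def)
    then show ?thesis using Kb[of x] Kb[of 0] by linarith
  qed
qed

lemma smoothing_ex:
  fixes \<phi> :: "real \<Rightarrow> real" and L h :: real
  assumes cont: "continuous_on UNIV \<phi>" and bnd: "\<And>x. \<bar>\<phi> x\<bar> \<le> 1"
    and supp: "\<And>x. x \<notin> {-L..L} \<Longrightarrow> \<phi> x = 0" and h: "h > 0"
  shows "\<exists>\<psi>. continuous_on UNIV \<psi> \<and> (\<forall>x. \<bar>\<psi> x\<bar> \<le> 1) \<and> (\<forall>x. x \<notin> {-L-h..L} \<longrightarrow> \<psi> x = 0) \<and>
    (\<forall>x y. \<bar>\<psi> x - \<psi> y\<bar> \<le> 2 / h * \<bar>x - y\<bar>) \<and>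
    (\<forall>x. \<bar>LBINT t=0..ereal x. (\<phi> t - \<psi> t) / 2\<bar> \<le> h)"
  apply (rule exI[of _ "\<lambda>x. ((LBINT t=(0::real)..(x+h). \<phi> t) - (LBINT t=(0::real)..x. \<phi> t)) / h"])
  using smoothing[OF assms] by blast



definition tau :: "real \<Rightarrow> real" where "tau y = max 0 (1 - \<bar>y\<bar>)"

lemma tau_cont: "continuous_on UNIV tau"
  unfolding tau_def by (intro continuous_intros)

lemma tau_bnd: "\<bar>tau y\<bar> \<le> 1"
  unfolding tau_def by auto

lemma interp:
  fixes f :: "real \<Rightarrow> real" and C \<delta> :: real and N :: int
  assumes Lip: "\<And>x y. \<bar>f x - f y\<bar> \<le> C * \<bar>x - y\<bar>" and C: "C \<ge> 0" and d: "\<delta> > 0"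
    and zero: "\<And>k::int. k \<notin> {-N..N} \<Longrightarrow> f (of_int k * \<delta>) = 0"
  shows "\<bar>f x - (\<Sum>k\<in>{-N..N}. f (of_int k * \<delta>) * tau (x / \<delta> - of_int k))\<bar> \<le> C * \<delta>"
proof -
  define j where "j = \<lfloor>x / \<delta>\<rfloor>"
  define t where "t = x / \<delta> - of_int j"
  have t: "0 \<le> t" "t < 1" unfolding t_def j_def by linarith+
  have xe: "x / \<delta> = of_int j + t" by (simp add: t_def)
  have trm: "f (of_int k * \<delta>) * tau (x / \<delta> - of_int k) =
      (if k = j then f (of_int j * \<delta>) * (1 - t) else 0) +
      (if k = j + 1 then f (of_int (j+1) * \<delta>) * t else 0)" for k
  proof -
    consider "k = j" | "k = j + 1" | "k \<le> j - 1" | "k \<ge> j + 2" by linarith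
    then show ?thesis
    proof cases
      case 1 then show ?thesis using t by (simp add: xe tau_def)
    next
      case 2 then show ?thesis using t by (simp add: xe tau_def)
    next
      case 3
      then have "of_int k \<le> of_int j - (1::real)" by linarith
      then have "tau (x / \<delta> - of_int k) = 0" using t by (simp add: xe tau_def)
      then show ?thesis using 3 by simp
    next
      case 4
      then have "of_int k \<ge> of_int j + (2::real)" by linarith
      then have "tau (x / \<delta> - of_int k) = 0" using t by (simp add: xe tau_def)
      then show ?thesis using 4 by simp
    qed
  qed
  have sum1: "(\<Sum>k\<in>{-N..N}. (if k = j then f (of_int j * \<delta>) * (1 - t) else 0)) = f (of_int j * \<delta>) * (1 - t)"
    using zero[of j] by (simp add: sum.delta)
  have sum2: "(\<Sum>k\<in>{-N..N}. (if k = j + 1 then f (of_int (j+1) * \<delta>) * t else 0)) = f (of_int (j+1) * \<delta>) * t"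
    using zero[of "j+1"] by (simp add: sum.delta)
  have S: "(\<Sum>k\<in>{-N..N}. f (of_int k * \<delta>) * tau (x / \<delta> - of_int k)) =
      f (of_int j * \<delta>) * (1 - t) + f (of_int (j+1) * \<delta>) * t"
    by (simp only: trm sum.distrib sum1 sum2)
  have x1: "x = (of_int j + t) * \<delta>" using xe d by (simp add: field_simps)
  have e1: "\<bar>f x - f (of_int j * \<delta>)\<bar> \<le> C * \<delta>"
  proof -
    have "\<bar>x - of_int j * \<delta>\<bar> \<le> \<delta>" using t d by (simp add: x1 algebra_simps)
    then show ?thesis using Lip[of x "of_int j * \<delta>"] C by (meson mult_left_mono order_trans)
  qed
  have e2: "\<bar>f x - f (of_int (j+1) * \<delta>)\<bar> \<le> C * \<delta>"
  proof -
    have "\<bar>x - of_int (j+1) * \<delta>\<bar> \<le> \<delta>" using t d by (simp add: x1 algebra_simps)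
    then show ?thesis using Lip[of x "of_int (j+1) * \<delta>"] C by (meson mult_left_mono order_trans)
  qed
  have "f x - (f (of_int j * \<delta>) * (1 - t) + f (of_int (j+1) * \<delta>) * t) =
      (1 - t) * (f x - f (of_int j * \<delta>)) + t * (f x - f (of_int (j+1) * \<delta>))"
    by (simp add: algebra_simps)
  also have "\<bar>\<dots>\<bar> \<le> (1 - t) * (C * \<delta>) + t * (C * \<delta>)"
  proof -
    have "\<bar>(1 - t) * (f x - f (of_int j * \<delta>))\<bar> \<le> (1 - t) * (C * \<delta>)"
      using e1 t by (simp add: abs_mult mult_left_mono)
    moreover have "\<bar>t * (f x - f (of_int (j+1) * \<delta>))\<bar> \<le> t * (C * \<delta>)"
      using e2 t by (simp add: abs_mult mult_left_mono)
    ultimately show ?thesis by (meson abs_triangle_ineq add_mono order_trans)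
  qed
  also have "\<dots> = C * \<delta>" by (simp add: algebra_simps)
  finally show ?thesis by (simp only: S)
qed



lemma meas_cont:
  assumes "real_distribution M" "continuous_on UNIV (f :: real \<Rightarrow> real)"
  shows "f \<in> borel_measurable M"
proof -
  interpret real_distribution M by fact
  have "f \<in> borel_measurable borel" using assms(2) by (rule borel_measurable_continuous_onI)
  then show ?thesis by (simp add: measurable_cong_sets[OF events_eq_borel refl])
qed

lemma int_bdd:
  assumes "real_distribution M" "continuous_on UNIV (f :: real \<Rightarrow> real)" "\<And>x. \<bar>f x\<bar> \<le> B"
  shows "integrable M f"
proof -
  interpret real_distribution M by fact
  show ?thesis
    by (rule integrable_const_bound[where B=B]) (use assms meas_cont in auto)
qed

lemma reg:
  assumes "real_distribution M" "A \<in> sets borel" "e > 0"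
  shows "\<exists>K U. compact K \<and> K \<subseteq> A \<and> A \<subseteq> U \<and> open U \<and> measure M U - measure M K \<le> e"
proof -
  interpret real_distribution M by fact
  have fin: "emeasure M (space M) \<noteq> \<infinity>" by simp
  have AM: "A \<in> sets M" using assms by simp
  obtain K where K: "compact K" "K \<subseteq> A" "measure M A - e/2 < measure M K"
  proof (cases "measure M A - e/2 < 0")
    case True
    then show ?thesis using that[of "{}"] by auto
  next
    case False
    have "ennreal (measure M A - e/2) < emeasure M A"
      using False assms(3) by (simp add: emeasure_eq_measure ennreal_less_iff)
    also have "\<dots> = (SUP K \<in> {K. K \<subseteq> A \<and> compact K}. emeasure M K)"
      by (rule inner_regular[OF events_eq_borel fin assms(2)])
    finally obtain K where "K \<subseteq> A" "compact K" "ennreal (measure M A - e/2) < emeasure M K"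
      by (auto simp: less_SUP_iff)
    moreover have "K \<in> sets M" using \<open>compact K\<close> by (simp add: borel_compact)
    ultimately show ?thesis using that[of K] False by (simp add: emeasure_eq_measure ennreal_less_iff)
  qed
  obtain U where U: "open U" "A \<subseteq> U" "measure M U < measure M A + e/2"
  proof -
    have "(INF U \<in> {U. A \<subseteq> U \<and> open U}. emeasure M U) = emeasure M A"
      by (rule outer_regular[OF events_eq_borel fin assms(2), symmetric])
    also have "\<dots> < ennreal (measure M A + e/2)"
      using assms(3) by (simp add: emeasure_eq_measure ennreal_less_iff)
    finally obtain U where "A \<subseteq> U" "open U" "emeasure M U < ennreal (measure M A + e/2)"
      by (auto simp: INF_less_iff)
    moreover have "U \<in> sets M" using \<open>open U\<close> by simp
    ultimately show ?thesis using that[of U]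
      by (simp add: emeasure_eq_measure ennreal_less_iff)
  qed
  show ?thesis using K U by (intro exI[of _ K] exI[of _ U]) auto
qed



lemma approx_one:
  assumes M: "real_distribution M" and c: "continuous_on UNIV \<phi>"
    and p01: "\<And>x. 0 \<le> \<phi> x \<and> \<phi> x \<le> 1"
    and K: "compact K" "K \<subseteq> A" and U: "open U" "A \<subseteq> U" and A: "A \<in> sets borel"
    and one: "\<And>x. x \<in> K \<Longrightarrow> \<phi> x = 1" and zero: "\<And>x. x \<notin> U \<Longrightarrow> \<phi> x = 0"
  shows "\<bar>measure M A - integral\<^sup>L M \<phi>\<bar> \<le> measure M U - measure M K"
proof -
  interpret real_distribution M by fact
  have KM: "K \<in> sets M" using K by (simp add: borel_compact)
  have UM: "U \<in> sets M" using U by simp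
  have AM: "A \<in> sets M" using A by simp
  have ip: "integrable M \<phi>" by (rule int_bdd[OF M c, of 1]) (use p01 in auto)
  have iK: "integrable M (indicator K :: real \<Rightarrow> real)"
    by (rule integrable_real_indicator[OF KM]) (simp add: less_top[symmetric])
  have "integral\<^sup>L M (indicator K :: real \<Rightarrow> real) \<le> integral\<^sup>L M \<phi>"
    by (rule integral_mono[OF iK ip]) (use p01 one in \<open>auto simp: indicator_def\<close>)
  then have 1: "measure M K \<le> integral\<^sup>L M \<phi>" using KM by simp
  have iU: "integrable M (indicator U :: real \<Rightarrow> real)"
    by (rule integrable_real_indicator[OF UM]) (simp add: less_top[symmetric])
  have "integral\<^sup>L M \<phi> \<le> integral\<^sup>L M (indicator U :: real \<Rightarrow> real)"
    by (rule integral_mono[OF ip iU]) (use p01 zero in \<open>auto simp: indicator_def\<close>)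
  also have "\<dots> = measure M U" using UM by simp
  finally have 2: "integral\<^sup>L M \<phi> \<le> measure M U" .
  have "measure M K \<le> measure M A" "measure M A \<le> measure M U"
    using K U KM UM AM by (auto intro!: finite_measure_mono)
  then show ?thesis using 1 2 by linarith
qed

lemma approx_set:
  assumes M: "real_distribution M" and M': "real_distribution M'"
    and A: "A \<in> sets borel" "A \<subseteq> {-L..L}" and e: "e > 0"
  shows "\<exists>\<phi>. continuous_on UNIV \<phi> \<and> (\<forall>x. 0 \<le> \<phi> x \<and> \<phi> x \<le> 1) \<and>
     (\<forall>x. x \<notin> {-(L+1)..L+1} \<longrightarrow> \<phi> x = 0) \<and>
     \<bar>measure M A - integral\<^sup>L M \<phi>\<bar> \<le> e \<and> \<bar>measure M' A - integral\<^sup>L M' \<phi>\<bar> \<le> e"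
proof -
  obtain K1 U1 where 1: "compact K1" "K1 \<subseteq> A" "A \<subseteq> U1" "open U1" "measure M U1 - measure M K1 \<le> e"
    using reg[OF M A(1) e] by blast
  obtain K2 U2 where 2: "compact K2" "K2 \<subseteq> A" "A \<subseteq> U2" "open U2" "measure M' U2 - measure M' K2 \<le> e"
    using reg[OF M' A(1) e] by blast
  define K where "K = K1 \<union> K2"
  define U where "U = U1 \<inter> U2 \<inter> ball 0 (L+1)"
  have K: "compact K" "K \<subseteq> A" using 1 2 by (auto simp: K_def)
  have "A \<subseteq> ball 0 (L+1)"
  proof
    fix x assume "x \<in> A"
    then have "-L \<le> x" "x \<le> L" using A(2) by auto
    then show "x \<in> ball 0 (L+1)" by auto
  qed
  then have U: "open U" "A \<subseteq> U" using 1 2 by (auto simp: U_def)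
  have "closed K" "closed (- U)" "K \<inter> - U = {}" using K U compact_imp_closed by auto
  from Urysohn[OF this, of 1 0] obtain f :: "real \<Rightarrow> real" where
    f: "continuous_on UNIV f" "\<And>x. f x \<in> closed_segment 1 0" "\<And>x. x \<in> K \<Longrightarrow> f x = 1"
       "\<And>x. x \<in> - U \<Longrightarrow> f x = 0"
    by metis
  have p01: "\<And>x. 0 \<le> f x \<and> f x \<le> 1" using f(2) by (auto simp: closed_segment_eq_real_ivl)
  have z: "\<And>x. x \<notin> U \<Longrightarrow> f x = 0" using f(4) by auto
  have m1: "measure M U - measure M K \<le> e"
  proof -
    interpret real_distribution M by fact
    have "measure M U \<le> measure M U1" using U 1 by (auto intro!: finite_measure_mono simp: U_def)
    moreover have "measure M K1 \<le> measure M K" using K 1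
      by (auto intro!: finite_measure_mono simp: K_def borel_compact)
    ultimately show ?thesis using 1 by linarith
  qed
  have m2: "measure M' U - measure M' K \<le> e"
  proof -
    interpret real_distribution M' by fact
    have "measure M' U \<le> measure M' U2" using U 2 by (auto intro!: finite_measure_mono simp: U_def)
    moreover have "measure M' K2 \<le> measure M' K" using K 2
      by (auto intro!: finite_measure_mono simp: K_def borel_compact)
    ultimately show ?thesis using 2 by linarith
  qed
  have "\<forall>x. x \<notin> {-(L+1)..L+1} \<longrightarrow> f x = 0"
  proof (intro allI impI)
    fix x assume "x \<notin> {-(L+1)..L+1}"
    then have "x \<notin> U" by (auto simp: U_def)
    then show "f x = 0" by (rule z)
  qed
  moreover have "\<bar>measure M A - integral\<^sup>L M f\<bar> \<le> e"
    using approx_one[OF M f(1) p01 K U A(1) f(3) z] m1 by linarith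
  moreover have "\<bar>measure M' A - integral\<^sup>L M' f\<bar> \<le> e"
    using approx_one[OF M' f(1) p01 K U A(1) f(3) z] m2 by linarith
  ultimately show ?thesis using f(1) p01 by blast
qed



lemma WC:
  fixes \<mu> :: "nat \<Rightarrow> real measure" and \<mu>_lim :: "real measure"
  assumes distr: "\<And>n. n \<ge> 1 \<Longrightarrow> real_distribution (\<mu> n)"
    and distr_lim: "real_distribution \<mu>_lim"
    and weak: "weak_conv_m \<mu> \<mu>_lim"
    and f: "continuous_on UNIV f" "\<And>x. \<bar>f x\<bar> \<le> B"
  shows "(\<lambda>n. integral\<^sup>L (\<mu> n) f) \<longlonglongrightarrow> integral\<^sup>L \<mu>_lim (f :: real \<Rightarrow> real)"
proof -
  have d': "real_distribution (\<mu> (Suc n))" for n using distr by simp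
  have w': "weak_conv_m (\<lambda>n. \<mu> (Suc n)) \<mu>_lim"
    using weak unfolding weak_conv_m_def weak_conv_def by (auto intro: LIMSEQ_Suc)
  have "(\<lambda>n. integral\<^sup>L (\<mu> (Suc n)) f) \<longlonglongrightarrow> integral\<^sup>L \<mu>_lim f"
    by (rule weak_conv_imp_integral_bdd_continuous_conv[OF d' distr_lim w', of f B])
       (use f in \<open>auto simp: continuous_on_eq_continuous_at\<close>)
  then show ?thesis by (rule LIMSEQ_imp_Suc)
qed

lemma abs_int_le:
  assumes "real_distribution M" "integrable M f" "\<And>x. \<bar>f x\<bar> \<le> (c::real)"
  shows "\<bar>integral\<^sup>L M f\<bar> \<le> c"
proof -
  interpret real_distribution M by fact
  have "\<bar>integral\<^sup>L M f\<bar> \<le> integral\<^sup>L M (\<lambda>x. \<bar>f x\<bar>)" by (rule integral_abs_bound)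
  also have "\<dots> \<le> integral\<^sup>L M (\<lambda>x. c)"
    by (rule integral_mono) (use assms in auto)
  also have "\<dots> = c" using prob_space by simp
  finally show ?thesis .
qed



lemma meas_le_int:
  assumes M: "real_distribution M" and S: "S \<in> sets borel" and c: "continuous_on UNIV f"
    and p01: "\<And>x. 0 \<le> f x \<and> f x \<le> 1" and one: "\<And>x. x \<in> S \<Longrightarrow> f x = 1"
  shows "measure M S \<le> integral\<^sup>L M f"
proof -
  interpret real_distribution M by fact
  have SM: "S \<in> sets M" using S by simp
  have ip: "integrable M f" by (rule int_bdd[OF M c, of 1]) (use p01 in auto)
  have iK: "integrable M (indicator S :: real \<Rightarrow> real)"
    by (rule integrable_real_indicator[OF SM]) (simp add: less_top[symmetric])
  have "integral\<^sup>L M (indicator S :: real \<Rightarrow> real) \<le> integral\<^sup>L M f"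
    by (rule integral_mono[OF iK ip]) (use p01 one in \<open>auto simp: indicator_def\<close>)
  then show ?thesis using SM by simp
qed

lemma int_le_meas:
  assumes M: "real_distribution M" and S: "S \<in> sets borel" and c: "continuous_on UNIV f"
    and p01: "\<And>x. 0 \<le> f x \<and> f x \<le> 1" and zero: "\<And>x. x \<notin> S \<Longrightarrow> f x = 0"
  shows "integral\<^sup>L M f \<le> measure M S"
proof -
  interpret real_distribution M by fact
  have SM: "S \<in> sets M" using S by simp
  have ip: "integrable M f" by (rule int_bdd[OF M c, of 1]) (use p01 in auto)
  have iK: "integrable M (indicator S :: real \<Rightarrow> real)"
    by (rule integrable_real_indicator[OF SM]) (simp add: less_top[symmetric])
  have "integral\<^sup>L M f \<le> integral\<^sup>L M (indicator S :: real \<Rightarrow> real)"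
    by (rule integral_mono[OF ip iK]) (use p01 zero in \<open>auto simp: indicator_def\<close>)
  then show ?thesis using SM by simp
qed

lemma cut:
  assumes M: "real_distribution M" and A: "A \<in> sets borel" and S: "S \<in> sets borel"
    and m: "measure M S \<ge> 1 - e"
  shows "\<bar>measure M A - measure M (A \<inter> S)\<bar> \<le> e"
proof -
  interpret real_distribution M by fact
  have "measure M (A - A \<inter> S) = measure M A - measure M (A \<inter> S)"
    by (rule finite_measure_Diff) (use A S in auto)
  moreover have "measure M (A - A \<inter> S) \<le> measure M (space M - S)"
    by (rule finite_measure_mono) (use S in auto)
  moreover have "measure M (space M - S) = 1 - measure M S"
    by (rule prob_compl) (use S in simp)
  moreover have "measure M (A \<inter> S) \<le> measure M A"
    by (rule finite_measure_mono) (use A in auto)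
  ultimately show ?thesis using m by linarith
qed

lemma main_claim:
  fixes \<mu> :: "nat \<Rightarrow> real measure" and \<mu>_lim :: "real measure"
    and B :: "nat \<Rightarrow> real \<Rightarrow> real"
  assumes distr: "\<And>n. n \<ge> 1 \<Longrightarrow> real_distribution (\<mu> n)"
    and distr_lim: "real_distribution \<mu>_lim"
    and weak: "weak_conv_m \<mu> \<mu>_lim"
    and bound: "\<And>\<phi> n \<alpha>. continuous_on UNIV \<phi> \<Longrightarrow>
                 (\<exists>K. compact K \<and> (\<forall>x. x \<notin> K \<longrightarrow> \<phi> x = 0)) \<Longrightarrow>
                 (\<forall>x. \<bar>\<phi> x\<bar> \<le> 1) \<Longrightarrow> n \<ge> 1 \<Longrightarrow> \<alpha> > 0 \<Longrightarrow>
                 \<bar>integral\<^sup>L (\<mu> n) \<phi>\<bar>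
                   \<le> (SUP x::real. \<bar>LBINT t=0..ereal x. \<phi> t\<bar>) / \<alpha> + \<bar>B n \<alpha>\<bar>"
    and lim: "((\<lambda>\<alpha>. limsup (\<lambda>n. ereal \<bar>B n \<alpha>\<bar>)) \<longlongrightarrow> 0) (at_right 0)"
    and e: "\<epsilon> > 0"
  shows "\<exists>N. \<forall>n\<ge>N. \<forall>A\<in>sets borel. \<bar>measure (\<mu> n) A - measure \<mu>_lim A\<bar> \<le> 16 * \<epsilon>"
proof -
  interpret L: real_distribution \<mu>_lim by fact
  have wc: "\<And>(f :: real \<Rightarrow> real) c. continuous_on UNIV f \<Longrightarrow> (\<And>x. \<bar>f x\<bar> \<le> c) \<Longrightarrow>
      (\<lambda>n. integral\<^sup>L (\<mu> n) f) \<longlonglongrightarrow> integral\<^sup>L \<mu>_lim f"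
  proof -
    fix f :: "real \<Rightarrow> real" and c assume "continuous_on UNIV f" "\<And>x. \<bar>f x\<bar> \<le> (c::real)"
    then show "(\<lambda>n. integral\<^sup>L (\<mu> n) f) \<longlonglongrightarrow> integral\<^sup>L \<mu>_lim f"
      by (intro WC[where B=c] distr distr_lim weak) auto
  qed
  have "(\<lambda>i. measure \<mu>_lim {-real i..real i}) \<longlonglongrightarrow> measure \<mu>_lim (\<Union>i. {-real i..real i})"
    by (rule L.finite_Lim_measure_incseq) (auto simp: incseq_def)
  moreover have "(\<Union>i. {-real i..real i}) = UNIV"
  proof -
    have "x \<in> (\<Union>i. {-real i..real i})" for x
    proof -
      obtain n where "\<bar>x\<bar> \<le> real n" using real_arch_simple by blast
      then have "x \<in> {-real n..real n}" by auto
      then show ?thesis by blast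
    qed
    then show ?thesis by blast
  qed
  ultimately have "(\<lambda>i. measure \<mu>_lim {-real i..real i}) \<longlonglongrightarrow> 1"
    using L.prob_space by simp
  then have "eventually (\<lambda>i. measure \<mu>_lim {-real i..real i} > 1 - \<epsilon>) sequentially"
    by (rule order_tendstoD(1)) (use e in simp)
  then obtain i where i: "measure \<mu>_lim {-real i..real i} > 1 - \<epsilon>"
    by (auto simp: eventually_sequentially)
  define R where "R = real i"
  define L where "L = R + 1"
  define ch where "ch = (\<lambda>x::real. max 0 (min 1 (R + 1 - \<bar>x\<bar>)))"
  have chc: "continuous_on UNIV ch" unfolding ch_def by (intro continuous_intros)
  have chb: "\<And>x. \<bar>ch x\<bar> \<le> 1" and ch01: "\<And>x. 0 \<le> ch x \<and> ch x \<le> 1" by (auto simp: ch_def)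
  have ch1: "\<And>x. x \<in> {-R..R} \<Longrightarrow> ch x = 1" by (auto simp: ch_def)
  have ch0: "\<And>x. x \<notin> {-L..L} \<Longrightarrow> ch x = 0" by (auto simp: ch_def L_def)
  have "measure \<mu>_lim {-R..R} \<le> integral\<^sup>L \<mu>_lim ch"
    by (rule meas_le_int[OF distr_lim _ chc ch01 ch1]) simp
  then have "integral\<^sup>L \<mu>_lim ch > 1 - \<epsilon>" using i by (simp add: R_def)
  then have "eventually (\<lambda>n. integral\<^sup>L (\<mu> n) ch > 1 - \<epsilon>) sequentially"
    by (rule order_tendstoD(1)[OF wc[OF chc chb]])
  then obtain N1 where N1: "\<And>n. n \<ge> N1 \<Longrightarrow> integral\<^sup>L (\<mu> n) ch > 1 - \<epsilon>"
    by (auto simp: eventually_sequentially)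
  have limL: "measure \<mu>_lim {-L..L} \<ge> 1 - \<epsilon>"
  proof -
    have "measure \<mu>_lim {-R..R} \<le> measure \<mu>_lim {-L..L}"
      by (rule L.finite_measure_mono) (auto simp: L_def)
    then show ?thesis using i by (simp add: R_def)
  qed
  have "eventually (\<lambda>a. limsup (\<lambda>n. ereal \<bar>B n a\<bar>) < ereal \<epsilon>) (at_right 0)"
    by (rule order_tendstoD(2)[OF lim]) (use e in simp)
  then obtain b where b: "b > 0" "\<And>y. y > 0 \<Longrightarrow> y < b \<Longrightarrow> limsup (\<lambda>n. ereal \<bar>B n y\<bar>) < ereal \<epsilon>"
    by (auto simp: eventually_at_right_field)
  define \<alpha> where "\<alpha> = b / 2"
  have \<alpha>: "\<alpha> > 0" using b by (simp add: \<alpha>_def)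
  have "limsup (\<lambda>n. ereal \<bar>B n \<alpha>\<bar>) < ereal \<epsilon>" using b by (intro b(2)) (auto simp: \<alpha>_def)
  then have "eventually (\<lambda>n. ereal \<bar>B n \<alpha>\<bar> < ereal \<epsilon>) sequentially" by (rule Limsup_lessD)
  then obtain N2 where N2: "\<And>n. n \<ge> N2 \<Longrightarrow> \<bar>B n \<alpha>\<bar> < \<epsilon>"
    by (auto simp: eventually_sequentially)
  define h where "h = \<alpha> * \<epsilon>"
  have h: "h > 0" using \<alpha> e by (simp add: h_def)
  define \<delta> where "\<delta> = \<epsilon> * h / 2"
  have \<delta>: "\<delta> > 0" using h e by (simp add: \<delta>_def)
  define Nk where "Nk = \<lceil>(L + 1 + h) / \<delta>\<rceil>"
  define T where "T = (\<lambda>(k::int) x. tau (x / \<delta> - of_int k))"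
  have Tc: "\<And>k. continuous_on UNIV (T k)"
    unfolding T_def using \<delta> by (intro continuous_on_compose2[OF tau_cont] continuous_intros) auto
  have Tb: "\<And>k x. \<bar>T k x\<bar> \<le> 1" by (simp add: T_def tau_bnd)
  have "(\<lambda>n. \<Sum>k\<in>{-Nk..Nk}. \<bar>integral\<^sup>L (\<mu> n) (T k) - integral\<^sup>L \<mu>_lim (T k)\<bar>) \<longlonglongrightarrow> (\<Sum>k\<in>{-Nk..Nk}. 0)"
    by (intro tendsto_sum tendsto_rabs_zero LIM_zero wc[OF Tc Tb])
  then have "eventually (\<lambda>n. (\<Sum>k\<in>{-Nk..Nk}. \<bar>integral\<^sup>L (\<mu> n) (T k) - integral\<^sup>L \<mu>_lim (T k)\<bar>) < \<epsilon>) sequentially"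
    by (rule order_tendstoD(2)) (use e in simp)
  then obtain N3 where N3: "\<And>n. n \<ge> N3 \<Longrightarrow> (\<Sum>k\<in>{-Nk..Nk}. \<bar>integral\<^sup>L (\<mu> n) (T k) - integral\<^sup>L \<mu>_lim (T k)\<bar>) < \<epsilon>"
    by (auto simp: eventually_sequentially)
  show ?thesis
  proof (intro exI[of _ "max 1 (max N1 (max N2 N3))"] allI impI ballI)
    fix n and A :: "real set" assume n: "max 1 (max N1 (max N2 N3)) \<le> n" and A: "A \<in> sets borel"
    have dn: "real_distribution (\<mu> n)" using n by (intro distr) simp
    have limn: "measure (\<mu> n) {-L..L} \<ge> 1 - \<epsilon>"
      using int_le_meas[OF dn _ chc ch01 ch0, of "{-L..L}"] N1[of n] n by simp
    define A' where "A' = A \<inter> {-L..L}"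
    have A'b: "A' \<in> sets borel" "A' \<subseteq> {-L..L}" using A by (auto simp: A'_def)
    have c1: "\<bar>measure (\<mu> n) A - measure (\<mu> n) A'\<bar> \<le> \<epsilon>"
      unfolding A'_def by (rule cut[OF dn A _ limn]) simp
    have c2: "\<bar>measure \<mu>_lim A - measure \<mu>_lim A'\<bar> \<le> \<epsilon>"
      unfolding A'_def by (rule cut[OF distr_lim A _ limL]) simp
    obtain \<phi> where \<phi>c: "continuous_on UNIV \<phi>" and \<phi>01: "\<forall>x. 0 \<le> \<phi> x \<and> \<phi> x \<le> 1"
      and \<phi>0: "\<forall>x. x \<notin> {-(L+1)..L+1} \<longrightarrow> \<phi> x = 0"
      and a1: "\<bar>measure (\<mu> n) A' - integral\<^sup>L (\<mu> n) \<phi>\<bar> \<le> \<epsilon>"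
      and a2: "\<bar>measure \<mu>_lim A' - integral\<^sup>L \<mu>_lim \<phi>\<bar> \<le> \<epsilon>"
      using approx_set[OF dn distr_lim A'b e] by blast
    have \<phi>b: "\<And>x. \<bar>\<phi> x\<bar> \<le> 1" using \<phi>01 by (simp add: abs_le_iff)
    obtain \<psi> where \<psi>c: "continuous_on UNIV \<psi>" and \<psi>b: "\<forall>x. \<bar>\<psi> x\<bar> \<le> 1"
      and \<psi>0: "\<forall>x. x \<notin> {-(L+1)-h..L+1} \<longrightarrow> \<psi> x = 0"
      and \<psi>L: "\<forall>x y. \<bar>\<psi> x - \<psi> y\<bar> \<le> 2 / h * \<bar>x - y\<bar>"
      and \<psi>I: "\<forall>x. \<bar>LBINT t=0..ereal x. (\<phi> t - \<psi> t) / 2\<bar> \<le> h"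
      using smoothing_ex[OF \<phi>c \<phi>b _ h, of "L+1"] \<phi>0 by auto
    define g where "g = (\<lambda>t. (\<phi> t - \<psi> t) / 2)"
    have gc: "continuous_on UNIV g" unfolding g_def by (intro continuous_intros \<phi>c \<psi>c) auto
    have gb: "\<forall>x. \<bar>g x\<bar> \<le> 1"
    proof
      fix x show "\<bar>g x\<bar> \<le> 1" using \<phi>b[of x] \<psi>b[rule_format, of x] by (auto simp: g_def abs_le_iff)
    qed
    have gz: "\<exists>K. compact K \<and> (\<forall>x. x \<notin> K \<longrightarrow> g x = 0)"
      by (rule exI[of _ "{-(L+1)-h..L+1}"]) (use \<phi>0 \<psi>0 h in \<open>auto simp: g_def\<close>)
    have supb: "(SUP x::real. \<bar>LBINT t=0..ereal x. g t\<bar>) \<le> h"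
      by (rule cSUP_least) (use \<psi>I in \<open>auto simp: g_def\<close>)
    have gm: "\<bar>integral\<^sup>L (\<mu> m) g\<bar> \<le> 2 * \<epsilon>" if "m \<ge> 1" "m \<ge> N2" for m
    proof -
      have "\<bar>integral\<^sup>L (\<mu> m) g\<bar> \<le> (SUP x::real. \<bar>LBINT t=0..ereal x. g t\<bar>) / \<alpha> + \<bar>B m \<alpha>\<bar>"
        by (rule bound[OF gc gz gb that(1) \<alpha>])
      also have "\<dots> \<le> h / \<alpha> + \<epsilon>"
        using divide_right_mono[OF supb, of \<alpha>] \<alpha> N2[OF that(2)] by linarith
      also have "h / \<alpha> = \<epsilon>" using \<alpha> by (simp add: h_def)
      finally show ?thesis by simp
    qed
    have gn: "\<bar>integral\<^sup>L (\<mu> n) g\<bar> \<le> 2 * \<epsilon>" using gm n by simp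
    have gl: "\<bar>integral\<^sup>L \<mu>_lim g\<bar> \<le> 2 * \<epsilon>"
    proof (rule tendsto_upperbound)
      show "(\<lambda>m. \<bar>integral\<^sup>L (\<mu> m) g\<bar>) \<longlonglongrightarrow> \<bar>integral\<^sup>L \<mu>_lim g\<bar>"
        by (intro tendsto_rabs wc[OF gc]) (use gb in auto)
      show "eventually (\<lambda>m. \<bar>integral\<^sup>L (\<mu> m) g\<bar> \<le> 2 * \<epsilon>) sequentially"
        unfolding eventually_sequentially by (intro exI[of _ "max 1 N2"]) (auto intro!: gm)
    qed simp
    define P where "P = (\<lambda>x. \<Sum>k\<in>{-Nk..Nk}. \<psi> (of_int k * \<delta>) * T k x)"
    have Perr: "\<bar>\<psi> x - P x\<bar> \<le> \<epsilon>" for x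
    proof -
      have "\<bar>\<psi> x - P x\<bar> \<le> 2 / h * \<delta>"
        unfolding P_def T_def
      proof (rule interp)
        show "\<And>x y. \<bar>\<psi> x - \<psi> y\<bar> \<le> 2 / h * \<bar>x - y\<bar>" using \<psi>L by blast
        show "0 \<le> 2 / h" using h by simp
        show "\<delta> > 0" by (fact \<delta>)
        show "\<psi> (of_int k * \<delta>) = 0" if "k \<notin> {-Nk..Nk}" for k
        proof -
          have "of_int k * \<delta> \<notin> {-(L+1)-h..L+1}"
          proof (cases "k > Nk")
            case True
            then have "of_int k \<ge> of_int Nk + (1::real)" by linarith
            moreover have "of_int Nk \<ge> (L + 1 + h) / \<delta>" by (simp add: Nk_def)
            ultimately have "of_int k \<ge> (L + 1 + h) / \<delta> + 1" by linarith
            then have "of_int k * \<delta> \<ge> ((L + 1 + h) / \<delta> + 1) * \<delta>" using \<delta> by (simp add: mult_right_mono)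
            moreover have "((L + 1 + h) / \<delta> + 1) * \<delta> = L + 1 + h + \<delta>" using \<delta> by (simp add: field_simps)
            ultimately have "of_int k * \<delta> \<ge> L + 1 + h + \<delta>" by simp
            then show ?thesis using h \<delta> by auto
          next
            case False
            then have "k < - Nk" using that by auto
            then have "of_int k \<le> - of_int Nk - (1::real)" by linarith
            moreover have "of_int Nk \<ge> (L + 1 + h) / \<delta>" by (simp add: Nk_def)
            ultimately have "of_int k \<le> - ((L + 1 + h) / \<delta>) - 1" by linarith
            then have "of_int k * \<delta> \<le> (- ((L + 1 + h) / \<delta>) - 1) * \<delta>" using \<delta> by (simp add: mult_right_mono)
            moreover have "(- ((L + 1 + h) / \<delta>) - 1) * \<delta> = - (L + 1 + h) - \<delta>" using \<delta> by (simp add: field_simps)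
            ultimately have "of_int k * \<delta> \<le> - (L + 1 + h) - \<delta>" by simp
            then show ?thesis using h \<delta> by auto
          qed
          then show ?thesis using \<psi>0 by blast
        qed
      qed
      also have "2 / h * \<delta> = \<epsilon>" using h by (simp add: \<delta>_def)
      finally show ?thesis .
    qed
    have Pc: "continuous_on UNIV P" unfolding P_def by (intro continuous_intros Tc)
    have Pb: "\<bar>P x\<bar> \<le> 1 + \<epsilon>" for x using Perr[of x] \<psi>b[rule_format, of x] by (auto simp: abs_le_iff)
    have intP: "integral\<^sup>L M P = (\<Sum>k\<in>{-Nk..Nk}. \<psi> (of_int k * \<delta>) * integral\<^sup>L M (T k))"
      if M: "real_distribution M" for M
      unfolding P_def
      by (subst Bochner_Integration.integral_sum) (auto intro!: integrable_mult_right int_bdd[OF M Tc Tb])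
    have Pdiff: "\<bar>integral\<^sup>L (\<mu> n) P - integral\<^sup>L \<mu>_lim P\<bar> \<le> \<epsilon>"
    proof -
      have "integral\<^sup>L (\<mu> n) P - integral\<^sup>L \<mu>_lim P =
          (\<Sum>k\<in>{-Nk..Nk}. \<psi> (of_int k * \<delta>) * (integral\<^sup>L (\<mu> n) (T k) - integral\<^sup>L \<mu>_lim (T k)))"
        by (simp add: intP[OF dn] intP[OF distr_lim] sum_subtractf right_diff_distrib)
      also have "\<bar>\<dots>\<bar> \<le> (\<Sum>k\<in>{-Nk..Nk}. \<bar>\<psi> (of_int k * \<delta>) * (integral\<^sup>L (\<mu> n) (T k) - integral\<^sup>L \<mu>_lim (T k))\<bar>)"
        by (rule sum_abs)
      also have "\<dots> \<le> (\<Sum>k\<in>{-Nk..Nk}. \<bar>integral\<^sup>L (\<mu> n) (T k) - integral\<^sup>L \<mu>_lim (T k)\<bar>)"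
      proof (rule sum_mono)
        fix k
        show "\<bar>\<psi> (of_int k * \<delta>) * (integral\<^sup>L (\<mu> n) (T k) - integral\<^sup>L \<mu>_lim (T k))\<bar>
            \<le> \<bar>integral\<^sup>L (\<mu> n) (T k) - integral\<^sup>L \<mu>_lim (T k)\<bar>"
          using \<psi>b by (simp add: abs_mult mult_left_le_one_le)
      qed
      also have "\<dots> \<le> \<epsilon>" using N3[of n] n by simp
      finally show ?thesis .
    qed
    have iP: "\<bar>integral\<^sup>L M \<psi> - integral\<^sup>L M P\<bar> \<le> \<epsilon>" if M: "real_distribution M" for M
    proof -
      have i1: "integrable M \<psi>" by (rule int_bdd[OF M \<psi>c]) (use \<psi>b in blast)
      have i2: "integrable M P" by (rule int_bdd[OF M Pc Pb])
      have "integral\<^sup>L M \<psi> - integral\<^sup>L M P = integral\<^sup>L M (\<lambda>x. \<psi> x - P x)"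
        by (rule Bochner_Integration.integral_diff[OF i1 i2, symmetric])
      also have "\<bar>\<dots>\<bar> \<le> \<epsilon>"
        by (rule abs_int_le[OF M]) (use i1 i2 Perr in auto)
      finally show ?thesis .
    qed
    have dec: "integral\<^sup>L M \<phi> = 2 * integral\<^sup>L M g + integral\<^sup>L M \<psi>" if M: "real_distribution M" for M
    proof -
      have i1: "integrable M \<phi>" by (rule int_bdd[OF M \<phi>c \<phi>b])
      have i2: "integrable M \<psi>" by (rule int_bdd[OF M \<psi>c]) (use \<psi>b in blast)
      have "integral\<^sup>L M g = (integral\<^sup>L M \<phi> - integral\<^sup>L M \<psi>) / 2"
        unfolding g_def by (simp add: Bochner_Integration.integral_diff[OF i1 i2])
      then show ?thesis by simp
    qed
    have "\<bar>integral\<^sup>L (\<mu> n) \<phi> - integral\<^sup>L \<mu>_lim \<phi>\<bar> \<le> 11 * \<epsilon>"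
      using dec[OF dn] dec[OF distr_lim] gn gl iP[OF dn] iP[OF distr_lim] Pdiff
      by (simp add: abs_le_iff)
    then show "\<bar>measure (\<mu> n) A - measure \<mu>_lim A\<bar> \<le> 16 * \<epsilon>"
      using c1 c2 a1 a2 e by (simp add: abs_le_iff)
  qed
qed



theorem lemma5:
  fixes \<mu> :: "nat \<Rightarrow> real measure" and \<mu>_lim :: "real measure"
    and B :: "nat \<Rightarrow> real \<Rightarrow> real"
  assumes distr: "\<And>n. n \<ge> 1 \<Longrightarrow> real_distribution (\<mu> n)"
    and distr_lim: "real_distribution \<mu>_lim"
    and weak: "weak_conv_m \<mu> \<mu>_lim"
    and bound: "\<And>\<phi> n \<alpha>. continuous_on UNIV \<phi> \<Longrightarrow>
                 (\<exists>K. compact K \<and> (\<forall>x. x \<notin> K \<longrightarrow> \<phi> x = 0)) \<Longrightarrow>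
                 (\<forall>x. \<bar>\<phi> x\<bar> \<le> 1) \<Longrightarrow> n \<ge> 1 \<Longrightarrow> \<alpha> > 0 \<Longrightarrow>
                 \<bar>integral\<^sup>L (\<mu> n) \<phi>\<bar>
                   \<le> (SUP x::real. \<bar>LBINT t=0..ereal x. \<phi> t\<bar>) / \<alpha> + \<bar>B n \<alpha>\<bar>"
    and lim: "((\<lambda>\<alpha>. limsup (\<lambda>n. ereal \<bar>B n \<alpha>\<bar>)) \<longlongrightarrow> 0) (at_right 0)"
  shows "tv_conv \<mu> \<mu>_lim"
  unfolding tv_conv_def
proof (rule LIMSEQ_I)
  fix r :: real assume r: "r > 0"
  then have e: "r / 32 > 0" by simp
  obtain N where N: "\<And>n A. n \<ge> N \<Longrightarrow> A \<in> sets borel \<Longrightarrow>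
      \<bar>measure (\<mu> n) A - measure \<mu>_lim A\<bar> \<le> 16 * (r / 32)"
    using main_claim[OF distr distr_lim weak bound lim e] by blast
  show "\<exists>no. \<forall>n\<ge>no. norm (tv_dist (\<mu> n) \<mu>_lim - 0) < r"
  proof (intro exI allI impI)
    fix n assume n: "n \<ge> N"
    have bdd: "bdd_above ((\<lambda>A. \<bar>measure (\<mu> n) A - measure \<mu>_lim A\<bar>) ` sets borel)"
      by (rule bdd_aboveI2[where M="16 * (r/32)"]) (use N n in auto)
    have "tv_dist (\<mu> n) \<mu>_lim \<le> 16 * (r / 32)"
      unfolding tv_dist_def by (rule cSUP_least) (use N n in auto)
    moreover have "0 \<le> tv_dist (\<mu> n) \<mu>_lim"
      unfolding tv_dist_def by (rule cSUP_upper2[OF bdd, of "{}"]) auto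
    ultimately show "norm (tv_dist (\<mu> n) \<mu>_lim - 0) < r" using r by simp
  qed
qed

end
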